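(* Let $Z$ be a uniform read-$d$-times NBP and let $P_1,P_2$ be two directed paths of $Z$ having the same initial vertex and the same final vertex. Then a variable labels some edge of $P_1$ if and only if it labels some edge of $P_2$.
   Context: An NBP $Z$ is a directed acyclic multigraph with one source and one sink, some of whose edges are labelled with literals. $Z$ is read-$d$-times if each variable labels at most $d$ edges on each source-sink path, and uniform if each variable (of those labelling edges of $Z$) labels exactly $d$ edges on each source-sink path. *)

theory Defs
  imports Main
begin

text \<open>An NBP is given by a finite vertex set V, a finite edge set E (multigraph: edges are
  abstract objects with tail/head maps), a partial labelling of edges by literals
  (a literal is a pair (variable, polarity)), a source s and a sink t.\<close>

fun dpath :: "'e set \<Rightarrow> ('e \<Rightarrow> 'v) \<Rightarrow> ('e \<Rightarrow> 'v) \<Rightarrow> 'v \<Rightarrow> 'e list \<Rightarrow> 'v \<Rightarrow> bool" where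
  "dpath E tail head u [] v = (u = v)"
| "dpath E tail head u (e # es) v = (e \<in> E \<and> tail e = u \<and> dpath E tail head (head e) es v)"

definition is_NBP :: "'v set \<Rightarrow> 'e set \<Rightarrow> ('e \<Rightarrow> 'v) \<Rightarrow> ('e \<Rightarrow> 'v) \<Rightarrow> 'v \<Rightarrow> 'v \<Rightarrow> bool" where
  "is_NBP V E tail head s t \<longleftrightarrow>
     finite V \<and> finite E \<and> (\<forall>e\<in>E. tail e \<in> V \<and> head e \<in> V) \<and>
     {v \<in> V. \<not> (\<exists>e\<in>E. head e = v)} = {s} \<and>
     {v \<in> V. \<not> (\<exists>e\<in>E. tail e = v)} = {t} \<and>
     (\<forall>v es. v \<in> V \<longrightarrow> dpath E tail head v es v \<longrightarrow> es = [])"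

definition labels :: "('e \<Rightarrow> ('x \<times> bool) option) \<Rightarrow> 'x \<Rightarrow> 'e \<Rightarrow> bool" where
  "labels lab x e \<longleftrightarrow> (\<exists>b. lab e = Some (x, b))"

definition count_var :: "('e \<Rightarrow> ('x \<times> bool) option) \<Rightarrow> 'x \<Rightarrow> 'e list \<Rightarrow> nat" where
  "count_var lab x es = length (filter (labels lab x) es)"

definition read_d_times ::
  "'e set \<Rightarrow> ('e \<Rightarrow> 'v) \<Rightarrow> ('e \<Rightarrow> 'v) \<Rightarrow> ('e \<Rightarrow> ('x \<times> bool) option) \<Rightarrow> 'v \<Rightarrow> 'v \<Rightarrow> nat \<Rightarrow> bool" where
  "read_d_times E tail head lab s t d \<longleftrightarrow>
     (\<forall>p x. dpath E tail head s p t \<longrightarrow> count_var lab x p \<le> d)"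

definition uniform_NBP ::
  "'e set \<Rightarrow> ('e \<Rightarrow> 'v) \<Rightarrow> ('e \<Rightarrow> 'v) \<Rightarrow> ('e \<Rightarrow> ('x \<times> bool) option) \<Rightarrow> 'v \<Rightarrow> 'v \<Rightarrow> nat \<Rightarrow> bool" where
  "uniform_NBP E tail head lab s t d \<longleftrightarrow>
     (\<forall>p x. dpath E tail head s p t \<longrightarrow> (\<exists>e\<in>E. labels lab x e) \<longrightarrow> count_var lab x p = d)"

end

theory Submission
  imports Defs
begin

lemma dpath_append:
  "dpath E tail head u (p @ q) w \<longleftrightarrow> (\<exists>m. dpath E tail head u p m \<and> dpath E tail head m q w)"
  by (induction p arbitrary: u) auto

lemma trancl_path:
  assumes "(a, b) \<in> {(tail e, head e) | e. e \<in> E}\<^sup>+"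
  shows "\<exists>es. es \<noteq> [] \<and> dpath E tail head a es b"
  using assms
proof (induction rule: trancl_induct)
  case (base y)
  then obtain e where "e \<in> E" "a = tail e" "y = head e" by auto
  then show ?case by (intro exI[of _ "[e]"]) auto
next
  case (step y z)
  then obtain es where es: "es \<noteq> []" "dpath E tail head a es y" by auto
  from step obtain e where "e \<in> E" "y = tail e" "z = head e" by auto
  with es show ?case
    by (intro exI[of _ "es @ [e]"]) (auto simp: dpath_append)
qed

lemma NBP_facts:
  assumes "is_NBP V E tail head s t"
  shows "finite E" "\<And>e. e \<in> E \<Longrightarrow> tail e \<in> V" "\<And>e. e \<in> E \<Longrightarrow> head e \<in> V"
    "\<And>w. w \<in> V \<Longrightarrow> w \<noteq> s \<Longrightarrow> \<exists>e\<in>E. head e = w"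
    "\<And>w. w \<in> V \<Longrightarrow> w \<noteq> t \<Longrightarrow> \<exists>e\<in>E. tail e = w"
    "\<And>w es. w \<in> V \<Longrightarrow> dpath E tail head w es w \<Longrightarrow> es = []"
proof -
  note a = assms[unfolded is_NBP_def]
  show "finite E" using a by simp
  show "\<And>e. e \<in> E \<Longrightarrow> tail e \<in> V" "\<And>e. e \<in> E \<Longrightarrow> head e \<in> V" using a by simp_all
  show "\<And>w es. w \<in> V \<Longrightarrow> dpath E tail head w es w \<Longrightarrow> es = []" using a by simp
  fix w assume w: "w \<in> V"
  { assume "w \<noteq> s"
    with w have "w \<notin> {v \<in> V. \<not> (\<exists>e\<in>E. head e = v)}" using a by simp
    with w show "\<exists>e\<in>E. head e = w" by simp }
  { assume "w \<noteq> t"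
    with w have "w \<notin> {v \<in> V. \<not> (\<exists>e\<in>E. tail e = v)}" using a by simp
    with w show "\<exists>e\<in>E. tail e = w" by simp }
qed

lemma reach:
  assumes N: "is_NBP V E tail head s t" and w: "w \<in> V"
  shows "(\<exists>p. dpath E tail head s p w) \<and> (\<exists>p. dpath E tail head w p t)"
proof -
  define R where "R = {(tail e, head e) | e. e \<in> E}"
  have fin: "finite R" using NBP_facts(1)[OF N] unfolding R_def by (simp add: setcompr_eq_image)
  have ac: "acyclic R"
    unfolding acyclic_def
  proof
    fix a show "(a, a) \<notin> R\<^sup>+"
    proof
      assume "(a, a) \<in> R\<^sup>+"
      then have "(a, a) \<in> {(tail e, head e) | e. e \<in> E}\<^sup>+" unfolding R_def .
      from trancl_path[OF this] obtain es where es: "es \<noteq> []" "dpath E tail head a es a"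
        by blast
      then obtain e es' where "es = e # es'" by (cases es) auto
      with es NBP_facts(2)[OF N] have "a \<in> V" by auto
      with es NBP_facts(6)[OF N] show False by blast
    qed
  qed
  have wf1: "wf R" using fin ac by (rule finite_acyclic_wf)
  have wf2: "wf (R\<inverse>)" using fin ac by (rule finite_acyclic_wf_converse)
  have A: "w \<in> V \<longrightarrow> (\<exists>p. dpath E tail head s p w)" for w
    using wf1
  proof (induction w rule: wf_induct_rule)
    case (less w)
    show ?case
    proof
      assume wV: "w \<in> V"
      show "\<exists>p. dpath E tail head s p w"
      proof (cases "w = s")
        case True then show ?thesis by (intro exI[of _ "[]"]) auto
      next
        case False
        with wV NBP_facts(4)[OF N] have "\<exists>e\<in>E. head e = w" by blast
        then obtain e where e: "e \<in> E" "head e = w" by auto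
        then have "(tail e, w) \<in> R" "tail e \<in> V" using NBP_facts(2,3)[OF N] unfolding R_def by auto
        then obtain p where "dpath E tail head s p (tail e)" using less.IH by blast
        with e show ?thesis by (intro exI[of _ "p @ [e]"]) (auto simp: dpath_append)
      qed
    qed
  qed
  have B: "w \<in> V \<longrightarrow> (\<exists>p. dpath E tail head w p t)" for w
    using wf2
  proof (induction w rule: wf_induct_rule)
    case (less w)
    show ?case
    proof
      assume wV: "w \<in> V"
      show "\<exists>p. dpath E tail head w p t"
      proof (cases "w = t")
        case True then show ?thesis by (intro exI[of _ "[]"]) auto
      next
        case False
        with wV NBP_facts(5)[OF N] have "\<exists>e\<in>E. tail e = w" by blast
        then obtain e where e: "e \<in> E" "tail e = w" by auto
        then have "(head e, w) \<in> R\<inverse>" "head e \<in> V" using NBP_facts(2,3)[OF N] unfolding R_def by auto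
        then obtain p where "dpath E tail head (head e) p t" using less.IH by blast
        with e show ?thesis by (intro exI[of _ "e # p"]) auto
      qed
    qed
  qed
  from A B w show ?thesis by blast
qed

lemma dpath_set: "dpath E tail head u p v \<Longrightarrow> set p \<subseteq> E"
  by (induction p arbitrary: u) auto

theorem lemma2:
  fixes V :: "'v set" and E :: "'e set" and tail head :: "'e \<Rightarrow> 'v"
    and lab :: "'e \<Rightarrow> ('x \<times> bool) option" and s t u v :: 'v and d :: nat
    and P1 P2 :: "'e list" and x :: 'x
  assumes "is_NBP V E tail head s t"
    and "read_d_times E tail head lab s t d"
    and "uniform_NBP E tail head lab s t d"
    and "dpath E tail head u P1 v"
    and "dpath E tail head u P2 v"
  shows "(\<exists>e\<in>set P1. labels lab x e) \<longleftrightarrow> (\<exists>e\<in>set P2. labels lab x e)"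
proof (cases "P1 = [] \<and> P2 = []")
  case True then show ?thesis by simp
next
  case False
  have uV: "u \<in> V"
  proof -
    from False obtain e p where "P1 = e # p \<or> P2 = e # p" by (metis list.exhaust)
    with assms(4,5) NBP_facts(2)[OF assms(1)] show ?thesis by auto
  qed
  from reach[OF assms(1) uV] obtain A where A: "dpath E tail head s A u" by blast
  have vV: "v \<in> V"
  proof (cases "P1 = []")
    case True then show ?thesis using assms(4) uV by simp
  next
    case False
    then obtain p e where "P1 = p @ [e]" by (metis rev_exhaust)
    with assms(4) NBP_facts(3)[OF assms(1)] show ?thesis by (auto simp: dpath_append)
  qed
  from reach[OF assms(1) vV] obtain B where B: "dpath E tail head v B t" by blast
  have p1: "dpath E tail head s (A @ P1 @ B) t" and p2: "dpath E tail head s (A @ P2 @ B) t"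
    using A B assms(4,5) by (auto simp: dpath_append)
  have key: "count_var lab x P1 = count_var lab x P2" if ex: "\<exists>e\<in>E. labels lab x e"
  proof -
    have "count_var lab x (A @ P1 @ B) = d" "count_var lab x (A @ P2 @ B) = d"
      using assms(3) p1 p2 ex unfolding uniform_NBP_def by auto
    then show ?thesis unfolding count_var_def by simp
  qed
  have cnt: "(\<exists>e\<in>set P. labels lab x e) \<longleftrightarrow> count_var lab x P > 0" for P
    unfolding count_var_def by (metis filter_empty_conv length_greater_0_conv)
  show ?thesis
  proof
    assume h: "\<exists>e\<in>set P1. labels lab x e"
    then have "\<exists>e\<in>E. labels lab x e" using dpath_set[OF assms(4)] by blast
    with h key cnt[of P1] cnt[of P2] show "\<exists>e\<in>set P2. labels lab x e" by simp
  next
    assume h: "\<exists>e\<in>set P2. labels lab x e"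
    then have "\<exists>e\<in>E. labels lab x e" using dpath_set[OF assms(5)] by blast
    with h key cnt[of P1] cnt[of P2] show "\<exists>e\<in>set P1. labels lab x e" by simp
  qed
qed

end
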